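(* Let $n>5$ be prime, $d\ge1$, and let $\gamma$ be a probability distribution on $\mathbb{Z}_n^d$ with $\gamma(k)\in\mathbb{Q}$ for all $k$. If the random walk on $\mathbb{Z}_n^d$ with step distribution $\gamma$ is reconstructive, then the Fourier coefficients $\{\hat{\gamma}(x)\}_{x\in\mathbb{Z}_n^d}$ are pairwise distinct.
   Context: The Fourier transform is $\hat{\gamma}(x)=\sum_{k\in\mathbb{Z}_n^d}\omega_n^{k\cdot x}\gamma(k)$, where $k\cdot x=\sum_{i=1}^d k_ix_i$ in $\mathbb{Z}_n$ and $\omega_n=e^{-2\pi i/n}$. The random walk has $v(1)$ uniform on $\mathbb{Z}_n^d$ and independent steps with $\mathbb{P}(v(t+1)-v(t)=k)=\gamma(k)$. It is reconstructive if, for any two labelings $f_1,f_2:\mathbb{Z}_n^d\to\{0,1\}$, the distributions of $\{f_1(v(t))\}_{t\ge1}$ and $\{f_2(v(t))\}_{t\ge1}$ coincide only if there is $\ell$ with $f_1(k)=f_2(k+\ell)$ for all $k$. *)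

theory Defs
  imports Complex_Main "HOL-Computational_Algebra.Primes"
begin

text \<open>Elements of Z_n^d are represented as functions nat => nat whose coordinates
  i < d lie in {0..<n} and whose coordinates i >= d are 0.\<close>

definition ZN :: "nat \<Rightarrow> nat \<Rightarrow> (nat \<Rightarrow> nat) set" where
  "ZN n d = {x. \<forall>i. (i < d \<longrightarrow> x i < n) \<and> (d \<le> i \<longrightarrow> x i = 0)}"

definition addZ :: "nat \<Rightarrow> nat \<Rightarrow> (nat \<Rightarrow> nat) \<Rightarrow> (nat \<Rightarrow> nat) \<Rightarrow> (nat \<Rightarrow> nat)" where
  "addZ n d x y = (\<lambda>i. if i < d then (x i + y i) mod n else 0)"

definition subZ :: "nat \<Rightarrow> nat \<Rightarrow> (nat \<Rightarrow> nat) \<Rightarrow> (nat \<Rightarrow> nat) \<Rightarrow> (nat \<Rightarrow> nat)" where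
  "subZ n d y x = (\<lambda>i. if i < d then (y i + n - x i) mod n else 0)"

definition prob_dist :: "nat \<Rightarrow> nat \<Rightarrow> ((nat \<Rightarrow> nat) \<Rightarrow> real) \<Rightarrow> bool" where
  "prob_dist n d \<gamma> \<longleftrightarrow> (\<forall>k\<in>ZN n d. \<gamma> k \<ge> 0) \<and> (\<Sum>k\<in>ZN n d. \<gamma> k) = 1"

definition fourier :: "nat \<Rightarrow> nat \<Rightarrow> ((nat \<Rightarrow> nat) \<Rightarrow> real) \<Rightarrow> (nat \<Rightarrow> nat) \<Rightarrow> complex" where
  "fourier n d \<gamma> x =
     (\<Sum>k\<in>ZN n d. exp (- 2 * pi * \<i> / of_nat n) ^ (\<Sum>i<d. k i * x i) * of_real (\<gamma> k))"

fun trans_prod :: "nat \<Rightarrow> nat \<Rightarrow> ((nat \<Rightarrow> nat) \<Rightarrow> real) \<Rightarrow> (nat \<Rightarrow> nat) list \<Rightarrow> real" where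
  "trans_prod n d \<gamma> (x # y # xs) = \<gamma> (subZ n d y x) * trans_prod n d \<gamma> (y # xs)"
| "trans_prod n d \<gamma> _ = 1"

text \<open>Finite-dimensional law of the label sequence: probability that
  (f(v(1)),...,f(v(m))) = w, where v(1) is uniform and steps are i.i.d. with law gamma.\<close>
definition label_law :: "nat \<Rightarrow> nat \<Rightarrow> ((nat \<Rightarrow> nat) \<Rightarrow> real) \<Rightarrow> ((nat \<Rightarrow> nat) \<Rightarrow> bool)
    \<Rightarrow> bool list \<Rightarrow> real" where
  "label_law n d \<gamma> f w =
     (\<Sum>xs\<in>{xs. length xs = length w \<and> set xs \<subseteq> ZN n d \<and> map f xs = w}.
        (1 / real (n ^ d)) * trans_prod n d \<gamma> xs)"

definition reconstructive :: "nat \<Rightarrow> nat \<Rightarrow> ((nat \<Rightarrow> nat) \<Rightarrow> real) \<Rightarrow> bool" where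
  "reconstructive n d \<gamma> \<longleftrightarrow>
     (\<forall>f1 f2 :: (nat \<Rightarrow> nat) \<Rightarrow> bool.
        (\<forall>w. label_law n d \<gamma> f1 w = label_law n d \<gamma> f2 w) \<longrightarrow>
        (\<exists>l\<in>ZN n d. \<forall>k\<in>ZN n d. f1 k = f2 (addZ n d k l)))"

end

theory Submission
  imports Defs "HOL-Computational_Algebra.Polynomial_Factorial" "HOL-Number_Theory.Cong" "HOL-Library.FuncSet"
begin


definition cycl :: "nat \<Rightarrow> int poly" where
  "cycl p = (\<Sum>k<p. [:0,1:] ^ k)"

lemma pcompose_X_power: "pcompose ([:0,1:] ^ k) q = q ^ k"
  by (induction k) (auto simp: pcompose_mult pcompose_pCons pcompose_1)

lemma cycl_shift: "pcompose (cycl p) [:1,1:] = (\<Sum>k<p. [:1,1::int:] ^ k)"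
  by (simp add: cycl_def pcompose_sum pcompose_X_power)

lemma shift_mult: "[:0,1:] * (\<Sum>k<p. [:1,1::int:] ^ k) = [:1,1:] ^ p - 1"
proof -
  have "[:1,1::int:] ^ p - 1 = ([:1,1:] - 1) * (\<Sum>k<p. [:1,1:] ^ k)"
    by (rule power_diff_1_eq)
  moreover have "[:1,1::int:] - 1 = [:0,1:]" by (simp add: one_pCons)
  ultimately show ?thesis by simp
qed

lemma coeff_shift:
  "coeff (\<Sum>k<p. [:1,1::int:] ^ k) i = (if i < p then int (p choose (Suc i)) else 0)"
proof -
  have a: "coeff ([:0,1:] * (\<Sum>k<p. [:1,1::int:] ^ k)) (Suc i) = coeff (\<Sum>k<p. [:1,1::int:] ^ k) i"
    by simp
  have b: "coeff ([:0,1:] * (\<Sum>k<p. [:1,1::int:] ^ k)) (Suc i) = coeff ([:1,1::int:] ^ p - 1) (Suc i)"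
    by (simp only: shift_mult)
  from a b have eq: "coeff (\<Sum>k<p. [:1,1::int:] ^ k) i = coeff ([:1,1::int:] ^ p) (Suc i)"
    by simp
  show ?thesis
  proof (cases "i < p")
    case True
    then show ?thesis using eq by (simp add: coeff_linear_poly_power)
  next
    case False
    have "degree ([:1,1::int:] ^ p) \<le> p"
      by (metis degree_linear_power le_refl one_neq_zero) 
    then show ?thesis using eq False by (simp add: coeff_eq_0)
  qed
qed

lemma eis_asym:
  fixes E g h :: "int poly" and p :: int
  assumes pr: "prime p" and E: "E = g * h" and dE: "degree E > 0"
    and dv: "\<And>i. i < degree E \<Longrightarrow> p dvd coeff E i"
    and lc: "\<not> p dvd lead_coeff E"
    and g0: "\<not> p dvd coeff h 0"
  shows "degree h = 0"
proof -
  have "E \<noteq> 0" using dE by auto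
  then have gh: "g \<noteq> 0" "h \<noteq> 0" using E by auto
  have "lead_coeff E = lead_coeff g * lead_coeff h" using E by (simp add: lead_coeff_mult)
  then have ng: "\<not> p dvd lead_coeff g" using lc by auto
  define r where "r = (LEAST i. \<not> p dvd coeff g i)"
  have r1: "\<not> p dvd coeff g r" unfolding r_def by (rule LeastI[of _ "degree g"]) (rule ng)
  have r2: "r \<le> degree g" unfolding r_def by (rule Least_le) (rule ng)
  have r3: "\<And>i. i < r \<Longrightarrow> p dvd coeff g i" unfolding r_def using not_less_Least by blast
  have "coeff E r = (\<Sum>i\<le>r. coeff g i * coeff h (r - i))" using E by (simp add: coeff_mult)
  also have "\<dots> = (\<Sum>i<r. coeff g i * coeff h (r - i)) + coeff g r * coeff h 0"
    by (simp add: lessThan_Suc_atMost[symmetric])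
  finally have ce: "coeff E r = (\<Sum>i<r. coeff g i * coeff h (r - i)) + coeff g r * coeff h 0" .
  have s: "p dvd (\<Sum>i<r. coeff g i * coeff h (r - i))"
    by (rule dvd_sum) (simp add: r3)
  have "\<not> p dvd coeff g r * coeff h 0" using pr r1 g0 by (simp add: prime_dvd_mult_iff)
  then have "\<not> p dvd coeff E r" using ce s by (simp add: dvd_add_right_iff)
  then have "\<not> r < degree E" using dv by auto
  moreover have "degree E = degree g + degree h" using E gh by (simp add: degree_mult_eq)
  ultimately show ?thesis using r2 by linarith
qed

lemma eisenstein:
  fixes E g h :: "int poly" and p :: int
  assumes pr: "prime p" and E: "E = g * h" and dE: "degree E > 0"
    and dv: "\<And>i. i < degree E \<Longrightarrow> p dvd coeff E i"
    and c0: "\<not> p^2 dvd coeff E 0"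
    and lc: "\<not> p dvd lead_coeff E"
  shows "degree g = 0 \<or> degree h = 0"
proof -
  have "coeff E 0 = coeff g 0 * coeff h 0" using E by (simp add: coeff_mult)
  moreover have "p dvd coeff E 0" using dv dE by auto
  ultimately have "\<not> (p dvd coeff g 0 \<and> p dvd coeff h 0)" using c0
    by (metis mult_dvd_mono power2_eq_square)
  then have "\<not> p dvd coeff h 0 \<or> \<not> p dvd coeff g 0" by auto
  then show ?thesis
  proof
    assume "\<not> p dvd coeff h 0" then show ?thesis using eis_asym[OF pr E dE dv lc] by auto
  next
    assume "\<not> p dvd coeff g 0"
    moreover have "E = h * g" using E by (simp add: mult.commute)
    ultimately show ?thesis using eis_asym[OF pr _ dE dv lc] by auto
  qed
qed

lemma mp_add: "map_poly (of_int::int\<Rightarrow>'a::comm_ring_1) (p + q) = map_poly of_int p + map_poly of_int q"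
  by (rule poly_eqI) (simp add: coeff_map_poly)

lemma mp_mult: "map_poly (of_int::int\<Rightarrow>'a::comm_ring_1) (p * q) = map_poly of_int p * map_poly of_int q"
  by (rule poly_eqI) (simp add: coeff_map_poly coeff_mult)

lemma mp_smult: "map_poly (of_int::int\<Rightarrow>'a::comm_ring_1) (smult a p) = smult (of_int a) (map_poly of_int p)"
  by (rule poly_eqI) (simp add: coeff_map_poly)

lemma shift_props:
  fixes p :: nat
  assumes pr: "prime p"
  defines "S \<equiv> (\<Sum>k<p. [:1,1::int:] ^ k)"
  shows "degree S = p - 1" "lead_coeff S = 1" "\<And>i. i < degree S \<Longrightarrow> int p dvd coeff S i"
    "coeff S 0 = int p"
proof -
  have p2: "p \<ge> 2" using pr by (simp add: prime_ge_2_nat)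
  have c: "\<And>i. coeff S i = (if i < p then int (p choose (Suc i)) else 0)"
    unfolding S_def by (rule coeff_shift)
  have "degree S \<le> p - 1" by (rule degree_le) (use p2 in \<open>auto simp: c\<close>)
  moreover have "p - 1 \<le> degree S" by (rule le_degree) (use p2 in \<open>simp add: c\<close>)
  ultimately show d: "degree S = p - 1" by simp
  show "lead_coeff S = 1" using p2 by (simp add: d c)
  show "coeff S 0 = int p" using p2 by (simp add: c)
  fix i assume "i < degree S"
  then have "Suc i < p" using d by simp
  then have "p dvd (p choose Suc i)" using pr by (intro dvd_choose_prime) auto
  then show "int p dvd coeff S i" using \<open>Suc i < p\<close> by (simp add: c)
qed

lemma cycl_irred:
  fixes p :: nat
  assumes pr: "prime p"
  shows "irreducible (cycl p)" "degree (cycl p) = p - 1"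
proof -
  define S where "S = (\<Sum>k<p. [:1,1::int:] ^ k)"
  note sp = shift_props[OF pr, folded S_def]
  have p2: "p \<ge> 2" using pr by (simp add: prime_ge_2_nat)
  have cs: "pcompose (cycl p) [:1,1:] = S" unfolding S_def by (rule cycl_shift)
  have dc: "degree (cycl p) = degree S" using cs degree_pcompose[of "cycl p" "[:1,1::int:]"] by simp
  then show dcp: "degree (cycl p) = p - 1" using sp by simp
  have lc: "lead_coeff (cycl p) = 1"
    using cs lead_coeff_comp[of "[:1,1::int:]" "cycl p"] sp by simp
  have pri: "prime (int p)" using pr by simp
  have nsq: "\<not> (int p)^2 dvd int p"
  proof
    assume "(int p)^2 dvd int p"
    then have "int p * int p dvd int p * 1" by (simp add: power2_eq_square)
    then have "int p dvd 1" using p2 by (subst (asm) dvd_mult_cancel_left) auto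
    then show False using p2 by simp
  qed
  show "irreducible (cycl p)"
  proof (rule irreducibleI)
    show "cycl p \<noteq> 0" using dcp p2 by auto
    show "\<not> is_unit (cycl p)" using dcp p2 by (auto simp: is_unit_poly_iff)
  next
    fix a b assume ab: "cycl p = a * b"
    have "S = pcompose a [:1,1:] * pcompose b [:1,1:]" using cs ab by (simp add: pcompose_mult)
    from eisenstein[OF pri this] sp p2 nsq
    have "degree (pcompose a [:1,1:]) = 0 \<or> degree (pcompose b [:1,1:]) = 0" by auto
    then have dd: "degree a = 0 \<or> degree b = 0" by (simp add: degree_pcompose)
    have "lead_coeff a * lead_coeff b = 1" using ab lc by (simp add: lead_coeff_mult)
    from dd show "is_unit a \<or> is_unit b"
    proof
      assume "degree a = 0"
      then obtain c where "a = [:c:]" by (metis degree_eq_zeroE)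
      moreover have "c dvd 1" using \<open>lead_coeff a * lead_coeff b = 1\<close> \<open>a = [:c:]\<close>
        by (metis dvdI lead_coeff_pCons(2) pCons_0_0 mult_zero_left zero_neq_one)
      ultimately show ?thesis by (simp add: is_unit_poly_iff)
    next
      assume "degree b = 0"
      then obtain c where "b = [:c:]" by (metis degree_eq_zeroE)
      moreover have "c dvd 1" using \<open>lead_coeff a * lead_coeff b = 1\<close> \<open>b = [:c:]\<close>
        by (metis dvdI mult.commute lead_coeff_pCons(2) pCons_0_0 mult_zero_left zero_neq_one)
      ultimately show ?thesis by (simp add: is_unit_poly_iff)
    qed
  qed
qed

lemma noroot:
  fixes p :: nat and z :: complex
  assumes pr: "prime p" and root: "poly (map_poly of_int (cycl p)) z = 0"
    and R: "R \<noteq> 0" "degree R < p - 1"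
  shows "poly (map_poly of_int R) z \<noteq> 0"
proof
  assume R0: "poly (map_poly of_int R) z = 0"
  define P where "P = (\<lambda>k. \<exists>Q::int poly. Q \<noteq> 0 \<and> degree Q = k \<and> poly (map_poly of_int Q) z = 0)"
  have "P (degree R)" unfolding P_def using R R0 by blast
  define m where "m = (LEAST k. P k)"
  have Pm: "P m" unfolding m_def by (rule LeastI) fact
  have mle: "m \<le> degree R" unfolding m_def by (rule Least_le) fact
  have mmin: "\<And>Q::int poly. Q \<noteq> 0 \<Longrightarrow> poly (map_poly of_int Q) z = 0 \<Longrightarrow> m \<le> degree Q"
    unfolding m_def by (rule Least_le) (auto simp: P_def)
  from Pm obtain M :: "int poly" where M: "M \<noteq> 0" "degree M = m" "poly (map_poly of_int M) z = 0"
    unfolding P_def by blast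
  define r where "r = pseudo_mod (cycl p) M"
  from pseudo_mod[OF M(1), of "cycl p"] obtain a q where aq: "a \<noteq> 0" "smult a (cycl p) = M * q + r"
    and rd: "r = 0 \<or> degree r < degree M" unfolding r_def by blast
  have "poly (map_poly of_int (smult a (cycl p))) z = poly (map_poly of_int (M * q + r)) z"
    using aq by simp
  then have "poly (map_poly of_int r) z = 0" using root M(3) by (simp add: mp_add mp_mult mp_smult)
  then have r0: "r = 0"
  proof (rule contrapos_pp)
    assume "r \<noteq> 0"
    then have "degree r < m" using rd M(2) by simp
    then show "poly (map_poly of_int r) z \<noteq> 0" using mmin[of r] \<open>r \<noteq> 0\<close> by linarith
  qed
  have prm: "prime_elem (cycl p)" by (rule irreducible_imp_prime_poly) (rule cycl_irred[OF pr])
  have dcp: "degree (cycl p) = p - 1" by (rule cycl_irred[OF pr])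
  have "M * q = [:a:] * cycl p" using aq r0 by simp
  then have "cycl p dvd M * q" by (metis dvd_triv_right)
  then have "cycl p dvd M \<or> cycl p dvd q" using prm by (simp add: prime_elem_dvd_mult_iff)
  then show False
  proof
    assume "cycl p dvd M"
    then have "degree (cycl p) \<le> degree M" using M(1) by (rule dvd_imp_degree_le)
    then show False using dcp M(2) mle R by simp
  next
    assume "cycl p dvd q"
    then obtain t where t: "q = cycl p * t" by blast
    have cne: "cycl p \<noteq> 0" using prm by auto
    have "cycl p * [:a:] = cycl p * (M * t)" using aq r0 t by (simp add: mult_ac)
    then have "[:a:] = M * t" using cne by (metis mult_cancel_left)
    then have "M * t \<noteq> 0" using aq(1) by auto
    then have "t \<noteq> 0" by auto
    have "degree M + degree t = 0" using \<open>[:a:] = M * t\<close>[symmetric] degree_mult_eq[OF M(1) \<open>t \<noteq> 0\<close>] by simp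
    then have "degree M = 0" by simp
    then obtain c where "M = [:c:]" by (metis degree_eq_zeroE)
    then show False using M by (simp add: map_poly_pCons)
  qed
qed

lemma mp_sum: "map_poly (of_int::int\<Rightarrow>'a::comm_ring_1) (sum f A) = (\<Sum>x\<in>A. map_poly of_int (f x))"
  by (induction A rule: infinite_finite_induct) (auto simp: mp_add)

lemma poly_monsum:
  "poly (map_poly (of_int::int\<Rightarrow>'a::comm_ring_1) (\<Sum>j<m. monom (b j) j)) z = (\<Sum>j<m. of_int (b j) * z ^ j)"
  by (simp add: mp_sum map_poly_monom poly_sum poly_monom)

lemma coeff_monsum: "coeff (\<Sum>j<m. monom (b j) j) i = (if i < m then b i else 0)"
  by (simp add: coeff_sum coeff_monom)

lemma cycl_monsum: "cycl p = (\<Sum>j<p. monom 1 j)"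
  by (simp add: cycl_def monom_altdef)

lemma int_indep:
  fixes p :: nat and z :: complex and a :: "nat \<Rightarrow> int"
  assumes pr: "prime p" and zp: "z ^ p = 1" and z1: "z \<noteq> 1"
    and s: "(\<Sum>j<p. of_int (a j) * z ^ j) = 0"
  shows "\<forall>j<p. a j = a (p - 1)"
proof -
  have p2: "p \<ge> 2" using pr by (simp add: prime_ge_2_nat)
  have geo: "(\<Sum>j<p. z ^ j) = 0"
  proof -
    have "z ^ p - 1 = (z - 1) * (\<Sum>j<p. z ^ j)" by (rule power_diff_1_eq)
    then show ?thesis using zp z1 by simp
  qed
  have root: "poly (map_poly of_int (cycl p)) z = 0"
    using poly_monsum[of "\<lambda>_. 1" p z] geo by (simp add: cycl_monsum)
  define R where "R = (\<Sum>j<p-1. monom (a j - a (p - 1)) j)"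
  have cR: "\<And>i. coeff R i = (if i < p - 1 then a i - a (p - 1) else 0)"
    unfolding R_def by (rule coeff_monsum)
  have dR: "degree R \<le> p - 2" by (rule degree_le) (auto simp: cR)
  have "poly (map_poly of_int R) z = (\<Sum>j<p-1. of_int (a j - a (p - 1)) * z ^ j)"
    unfolding R_def by (rule poly_monsum)
  also have "\<dots> = (\<Sum>j<p. of_int (a j - a (p - 1)) * z ^ j)"
  proof -
    have "{..<p} = insert (p - 1) {..<p-1}" using p2 by auto
    then show ?thesis by simp
  qed
  also have "\<dots> = (\<Sum>j<p. of_int (a j) * z ^ j) - of_int (a (p - 1)) * (\<Sum>j<p. z ^ j)"
    by (simp add: algebra_simps sum_subtractf sum_distrib_left sum_distrib_right)
  also have "\<dots> = 0" using s geo by simp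
  finally have "poly (map_poly of_int R) z = 0" .
  moreover have "degree R < p - 1" using dR p2 by linarith
  ultimately have "R = 0" using noroot[OF pr root, of R] by blast
  show ?thesis
  proof (intro allI impI)
    fix j assume "j < p"
    show "a j = a (p - 1)"
    proof (cases "j < p - 1")
      case True
      then have "coeff R j = a j - a (p - 1)" by (simp add: cR)
      then show ?thesis using \<open>R = 0\<close> by simp
    next
      case False
      then have "j = p - 1" using \<open>j < p\<close> by linarith
      then show ?thesis by simp
    qed
  qed
qed

lemma rat_indep:
  fixes p :: nat and z :: complex and c :: "nat \<Rightarrow> real"
  assumes pr: "prime p" and zp: "z ^ p = 1" and z1: "z \<noteq> 1"
    and rat: "\<forall>j<p. c j \<in> \<rat>"
    and s: "(\<Sum>j<p. of_real (c j) * z ^ j) = 0"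
  shows "\<forall>j<p. c j = c (p - 1)"
proof -
  define q where "q j = (SOME r. c j = of_rat r)" for j
  have cq: "c j = of_rat (q j)" if "j < p" for j
  proof -
    from rat that have "c j \<in> \<rat>" by auto
    then obtain r where "c j = of_rat r" by (auto elim: Rats_cases)
    then show ?thesis unfolding q_def by (rule someI)
  qed
  define den where "den j = snd (quotient_of (q j))" for j
  define num where "num j = fst (quotient_of (q j))" for j
  have denpos: "den j > 0" for j unfolding den_def
    by (metis prod.collapse quotient_of_denom_pos)
  have qnd: "q j = of_int (num j) / of_int (den j)" for j unfolding num_def den_def
    by (metis prod.collapse quotient_of_div)
  define D where "D = (\<Prod>j<p. den j)"
  have Dpos: "D > 0" unfolding D_def using denpos by (simp add: prod_pos)
  have "\<exists>k::int. of_int D * c j = of_int k" if "j < p" for j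
  proof -
    have "D = den j * (\<Prod>i\<in>{..<p} - {j}. den i)" unfolding D_def using that
      by (simp add: prod.remove)
    then have "of_int D * q j = of_int (num j * (\<Prod>i\<in>{..<p} - {j}. den i))"
      using qnd[of j] denpos[of j] by (simp add: field_simps)
    then have "of_int D * c j = of_int (num j * (\<Prod>i\<in>{..<p} - {j}. den i))"
      using cq[OF that] by (metis of_rat_mult of_rat_of_int_eq)
    then show ?thesis by blast
  qed
  then obtain a where a: "\<forall>j<p. of_int D * c j = of_int (a j)" by metis
  have "(\<Sum>j<p. of_int (a j) * z ^ j) = (\<Sum>j<p. of_int D * (of_real (c j) * z ^ j))"
  proof (rule sum.cong)
    fix j assume "j \<in> {..<p}"
    then have "complex_of_int (a j) = of_real (of_int D * c j)" using a by simp
    then show "complex_of_int (a j) * z ^ j = of_int D * (of_real (c j) * z ^ j)" by simp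
  qed simp
  also have "\<dots> = 0" using s by (simp add: sum_distrib_left[symmetric])
  finally have "\<forall>j<p. a j = a (p - 1)" using int_indep[OF pr zp z1] by blast
  moreover have "p - 1 < p" using pr prime_gt_0_nat by auto
  ultimately show ?thesis using a Dpos
    by (metis (no_types, lifting) mult_cancel_left of_int_eq_0_iff less_irrefl)
qed




lemma finite_ZN: "finite (ZN n d)"
proof -
  have "ZN n d \<subseteq> (\<lambda>h i. if i < d then h i else 0) ` (PiE {..<d} (\<lambda>_. {..<n}))"
  proof
    fix x assume x: "x \<in> ZN n d"
    have "x = (\<lambda>i. if i < d then restrict x {..<d} i else 0)"
      using x by (auto simp: ZN_def fun_eq_iff restrict_def)
    moreover have "restrict x {..<d} \<in> PiE {..<d} (\<lambda>_. {..<n})" using x by (auto simp: ZN_def)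
    ultimately show "x \<in> (\<lambda>h i. if i < d then h i else 0) ` (PiE {..<d} (\<lambda>_. {..<n}))" by blast
  qed
  moreover have "finite (PiE {..<d} (\<lambda>_. {..<n::nat}))" by (rule finite_PiE) auto
  ultimately show ?thesis by (meson finite_imageI finite_subset)
qed

fun Pf :: "nat \<Rightarrow> nat \<Rightarrow> ((nat\<Rightarrow>nat)\<Rightarrow>real) \<Rightarrow> ((nat\<Rightarrow>nat)\<Rightarrow>bool) \<Rightarrow> (nat\<Rightarrow>nat) \<Rightarrow> bool list \<Rightarrow> real" where
  "Pf n d \<gamma> f a [] = 1"
| "Pf n d \<gamma> f a (w#ws) = (\<Sum>b\<in>{b\<in>ZN n d. f b = w}. \<gamma> (subZ n d b a) * Pf n d \<gamma> f b ws)"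

definition LS :: "nat \<Rightarrow> nat \<Rightarrow> ((nat\<Rightarrow>nat)\<Rightarrow>bool) \<Rightarrow> bool list \<Rightarrow> (nat\<Rightarrow>nat) list set" where
  "LS n d f w = {xs. length xs = length w \<and> set xs \<subseteq> ZN n d \<and> map f xs = w}"

lemma finite_LS: "finite (LS n d f w)"
proof -
  have "LS n d f w \<subseteq> {xs. set xs \<subseteq> ZN n d \<and> length xs = length w}" by (auto simp: LS_def)
  moreover have "finite {xs. set xs \<subseteq> ZN n d \<and> length xs = length w}"
    by (rule finite_lists_length_eq) (rule finite_ZN)
  ultimately show ?thesis by (rule finite_subset)
qed

lemma LS_Nil: "LS n d f [] = {[]}" by (auto simp: LS_def)

lemma LS_Cons: "LS n d f (w#ws) = (\<lambda>(b,xs). b#xs) ` (SIGMA b:{b\<in>ZN n d. f b = w}. LS n d f ws)"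
proof (rule set_eqI)
  fix xs
  show "xs \<in> LS n d f (w#ws) \<longleftrightarrow> xs \<in> (\<lambda>(b,xs). b#xs) ` (SIGMA b:{b\<in>ZN n d. f b = w}. LS n d f ws)"
    by (cases xs) (auto simp: LS_def)
qed

lemma inj_Cons: "inj_on (\<lambda>(b,xs). b#xs) A" by (auto simp: inj_on_def)

lemma Pf_sum: "(\<Sum>xs\<in>LS n d f ws. trans_prod n d \<gamma> (a#xs)) = Pf n d \<gamma> f a ws"
proof (induction ws arbitrary: a)
  case Nil
  then show ?case by (simp add: LS_Nil)
next
  case (Cons w ws)
  have "(\<Sum>xs\<in>LS n d f (w#ws). trans_prod n d \<gamma> (a#xs))
      = (\<Sum>(b,xs)\<in>(SIGMA b:{b\<in>ZN n d. f b = w}. LS n d f ws). trans_prod n d \<gamma> (a#b#xs))"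
    unfolding LS_Cons by (subst sum.reindex[OF inj_Cons]) (simp add: case_prod_beta comp_def)
  also have "\<dots> = (\<Sum>b\<in>{b\<in>ZN n d. f b = w}. \<Sum>xs\<in>LS n d f ws. \<gamma> (subZ n d b a) * trans_prod n d \<gamma> (b#xs))"
    by (subst sum.Sigma) (auto simp: finite_LS finite_ZN)
  also have "\<dots> = Pf n d \<gamma> f a (w#ws)"
    by (simp add: sum_distrib_left[symmetric] Cons.IH)
  finally show ?case .
qed

lemma law_Nil: "label_law n d \<gamma> f [] = 1 / real (n ^ d)"
proof -
  have "{xs. length xs = length ([]::bool list) \<and> set xs \<subseteq> ZN n d \<and> map f xs = []} = {[]}" by auto
  then show ?thesis by (simp add: label_law_def)
qed

lemma law_Cons: "label_law n d \<gamma> f (w#ws) = 1 / real (n ^ d) * (\<Sum>b\<in>{b\<in>ZN n d. f b = w}. Pf n d \<gamma> f b ws)"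
proof -
  have "label_law n d \<gamma> f (w#ws) = (\<Sum>xs\<in>LS n d f (w#ws). 1 / real (n ^ d) * trans_prod n d \<gamma> xs)"
    by (simp add: label_law_def LS_def)
  also have "\<dots> = (\<Sum>(b,xs)\<in>(SIGMA b:{b\<in>ZN n d. f b = w}. LS n d f ws). 1 / real (n ^ d) * trans_prod n d \<gamma> (b#xs))"
    unfolding LS_Cons by (subst sum.reindex[OF inj_Cons]) (simp add: case_prod_beta comp_def)
  also have "\<dots> = (\<Sum>b\<in>{b\<in>ZN n d. f b = w}. \<Sum>xs\<in>LS n d f ws. 1 / real (n ^ d) * trans_prod n d \<gamma> (b#xs))"
    by (subst sum.Sigma) (auto simp: finite_LS finite_ZN)
  also have "\<dots> = 1 / real (n ^ d) * (\<Sum>b\<in>{b\<in>ZN n d. f b = w}. Pf n d \<gamma> f b ws)"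
    by (simp add: sum_divide_distrib[symmetric] Pf_sum)
  finally show ?thesis .
qed



definition proj :: "nat \<Rightarrow> nat \<Rightarrow> (nat \<Rightarrow> nat) \<Rightarrow> (nat \<Rightarrow> nat) \<Rightarrow> nat" where
  "proj n d z k = (\<Sum>i<d. k i * z i) mod n"

lemma modarith1: "x < n \<Longrightarrow> y < (n::nat) \<Longrightarrow> ((x + n - y) mod n + y) mod n = x"
proof (cases "y \<le> x")
  case True
  assume "x < n" "y < n"
  have "x + n - y = (x - y) + n" using True by simp
  then have "(x + n - y) mod n = (x - y) mod n" by (metis mod_add_self2)
  also have "\<dots> = x - y" using \<open>x < n\<close> by simp
  finally show ?thesis using True \<open>x < n\<close> by simp
next
  case False
  assume "x < n" "y < n"
  then have "(x + n - y) mod n = x + n - y" using False by simp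
  then show ?thesis using False \<open>x < n\<close> \<open>y < n\<close> by simp
qed
lemma modarith2: "x < n \<Longrightarrow> y < (n::nat) \<Longrightarrow> ((x + y) mod n + n - y) mod n = x"
proof (cases "x + y < n")
  case True
  assume "x < n" "y < n"
  then show ?thesis using True by simp
next
  case False
  assume "x < n" "y < n"
  have e: "x + y = (x + y - n) + n" using False by simp
  have "x + y - n < n" using \<open>x < n\<close> \<open>y < n\<close> by simp
  have "(x + y) mod n = (x + y - n) mod n" using e by (metis mod_add_self2)
  also have "\<dots> = x + y - n" using \<open>x + y - n < n\<close> by simp
  finally show ?thesis using False \<open>x < n\<close> \<open>y < n\<close> by simp
qed
lemma subZ_ZN: "0 < n \<Longrightarrow> subZ n d b a \<in> ZN n d" by (auto simp: subZ_def ZN_def)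
lemma addZ_ZN: "0 < n \<Longrightarrow> addZ n d b a \<in> ZN n d" by (auto simp: addZ_def ZN_def)

lemma add_sub: "a \<in> ZN n d \<Longrightarrow> b \<in> ZN n d \<Longrightarrow> addZ n d (subZ n d b a) a = b"
  by (auto simp: addZ_def subZ_def ZN_def fun_eq_iff modarith1)

lemma sub_add: "a \<in> ZN n d \<Longrightarrow> k \<in> ZN n d \<Longrightarrow> subZ n d (addZ n d k a) a = k"
  by (auto simp: addZ_def subZ_def ZN_def fun_eq_iff modarith2)

lemma proj_lt: "0 < n \<Longrightarrow> proj n d z k < n" by (simp add: proj_def)

lemma proj_add: "proj n d z (addZ n d k a) = (proj n d z k + proj n d z a) mod n"
proof -
  have "(\<Sum>i<d. addZ n d k a i * z i) mod n = (\<Sum>i<d. (k i + a i) mod n * z i mod n) mod n"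
    by (simp add: addZ_def mod_sum_eq)
  also have "\<dots> = (\<Sum>i<d. (k i + a i) * z i mod n) mod n" by (simp add: mod_mult_left_eq)
  also have "\<dots> = (\<Sum>i<d. (k i + a i) * z i) mod n" by (simp add: mod_sum_eq)
  also have "\<dots> = ((\<Sum>i<d. k i * z i) + (\<Sum>i<d. a i * z i)) mod n"
    by (simp add: algebra_simps sum.distrib)
  also have "\<dots> = (proj n d z k + proj n d z a) mod n" by (simp add: proj_def mod_add_eq)
  finally show ?thesis by (simp add: proj_def)
qed

lemma proj_sub:
  assumes "0 < n" "a \<in> ZN n d" "b \<in> ZN n d"
  shows "proj n d z (subZ n d b a) = (proj n d z b + n - proj n d z a) mod n"
proof -
  have "proj n d z b = (proj n d z (subZ n d b a) + proj n d z a) mod n"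
    using proj_add[of n d z "subZ n d b a" a] add_sub[OF assms(2,3)] by simp
  then show ?thesis using modarith2[of "proj n d z (subZ n d b a)" n "proj n d z a"] assms(1)
    by (simp add: proj_lt)
qed




definition mu :: "nat \<Rightarrow> nat \<Rightarrow> ((nat\<Rightarrow>nat)\<Rightarrow>real) \<Rightarrow> (nat\<Rightarrow>nat) \<Rightarrow> nat \<Rightarrow> real" where
  "mu n d \<gamma> z j = (\<Sum>k\<in>{k\<in>ZN n d. proj n d z k = j}. \<gamma> k)"

fun Qf :: "nat \<Rightarrow> (nat\<Rightarrow>real) \<Rightarrow> (nat\<Rightarrow>bool) \<Rightarrow> nat \<Rightarrow> bool list \<Rightarrow> real" where
  "Qf n \<mu> g s [] = 1"
| "Qf n \<mu> g s (w#ws) = (\<Sum>t\<in>{t. t<n \<and> g t = w}. \<mu> ((t + n - s) mod n) * Qf n \<mu> g t ws)"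

lemma fiber_shift:
  assumes n: "0 < n" and a: "a \<in> ZN n d" and t: "t < n"
  shows "(\<Sum>b\<in>{b\<in>ZN n d. proj n d z b = t}. \<gamma> (subZ n d b a)) = mu n d \<gamma> z ((t + n - proj n d z a) mod n)"
  unfolding mu_def
proof (rule sum.reindex_bij_witness[where i = "\<lambda>k. addZ n d k a" and j = "\<lambda>b. subZ n d b a"])
  fix b assume b: "b \<in> {b\<in>ZN n d. proj n d z b = t}"
  then show "addZ n d (subZ n d b a) a = b" using add_sub[OF a] by auto
  show "subZ n d b a \<in> {k\<in>ZN n d. proj n d z k = (t + n - proj n d z a) mod n}"
    using b proj_sub[OF n a] subZ_ZN[OF n] by auto
  show "\<gamma> (subZ n d b a) = \<gamma> (subZ n d b a)" ..
next
  fix k assume k: "k \<in> {k\<in>ZN n d. proj n d z k = (t + n - proj n d z a) mod n}"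
  then show "subZ n d (addZ n d k a) a = k" using sub_add[OF a] by auto
  have "proj n d z (addZ n d k a) = t"
    using k proj_add[of n d z k a] modarith1[OF t proj_lt[OF n]] by simp
  then show "addZ n d k a \<in> {b\<in>ZN n d. proj n d z b = t}" using addZ_ZN[OF n] by auto
qed

lemma Pf_proj:
  assumes n: "0 < n"
  shows "a \<in> ZN n d \<Longrightarrow> Pf n d \<gamma> (\<lambda>k. g (proj n d z k)) a ws = Qf n (mu n d \<gamma> z) g (proj n d z a) ws"
proof (induction ws arbitrary: a)
  case Nil
  then show ?case by simp
next
  case (Cons w ws)
  let ?s = "proj n d z a"
  have "Pf n d \<gamma> (\<lambda>k. g (proj n d z k)) a (w#ws)
     = (\<Sum>b\<in>{b\<in>ZN n d. g (proj n d z b) = w}. \<gamma> (subZ n d b a) * Qf n (mu n d \<gamma> z) g (proj n d z b) ws)"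
    by (simp add: Cons.IH)
  also have "\<dots> = (\<Sum>t\<in>{t. t<n \<and> g t = w}. \<Sum>b\<in>{b. b \<in> {b\<in>ZN n d. g (proj n d z b) = w} \<and> proj n d z b = t}.
        \<gamma> (subZ n d b a) * Qf n (mu n d \<gamma> z) g (proj n d z b) ws)"
    by (rule sum.group[symmetric]) (auto simp: finite_ZN proj_lt[OF n])
  also have "\<dots> = (\<Sum>t\<in>{t. t<n \<and> g t = w}. \<Sum>b\<in>{b\<in>ZN n d. proj n d z b = t}.
        \<gamma> (subZ n d b a) * Qf n (mu n d \<gamma> z) g t ws)"
  proof (rule sum.cong)
    fix t assume "t \<in> {t. t<n \<and> g t = w}"
    then have "{b. b \<in> {b\<in>ZN n d. g (proj n d z b) = w} \<and> proj n d z b = t} = {b\<in>ZN n d. proj n d z b = t}"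
      by auto
    then show "(\<Sum>b\<in>{b. b \<in> {b\<in>ZN n d. g (proj n d z b) = w} \<and> proj n d z b = t}.
        \<gamma> (subZ n d b a) * Qf n (mu n d \<gamma> z) g (proj n d z b) ws) = (\<Sum>b\<in>{b\<in>ZN n d. proj n d z b = t}.
        \<gamma> (subZ n d b a) * Qf n (mu n d \<gamma> z) g t ws)"
      by (intro sum.cong) auto
  qed simp
  also have "\<dots> = (\<Sum>t\<in>{t. t<n \<and> g t = w}. mu n d \<gamma> z ((t + n - ?s) mod n) * Qf n (mu n d \<gamma> z) g t ws)"
  proof (rule sum.cong)
    fix t assume "t \<in> {t. t<n \<and> g t = w}"
    then show "(\<Sum>b\<in>{b\<in>ZN n d. proj n d z b = t}. \<gamma> (subZ n d b a) * Qf n (mu n d \<gamma> z) g t ws) =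
      mu n d \<gamma> z ((t + n - ?s) mod n) * Qf n (mu n d \<gamma> z) g t ws"
      using fiber_shift[OF n Cons.prems, where z=z and \<gamma>=\<gamma> and t=t] by (simp add: sum_distrib_right[symmetric])
  qed simp
  also have "\<dots> = Qf n (mu n d \<gamma> z) g ?s (w#ws)" by simp
  finally show ?case .
qed

lemma law_proj:
  assumes n: "0 < n"
  shows "label_law n d \<gamma> (\<lambda>k. g (proj n d z k)) (w#ws) = 1 / real (n ^ d) *
     (\<Sum>t\<in>{t. t<n \<and> g t = w}. real (card {a\<in>ZN n d. proj n d z a = t}) * Qf n (mu n d \<gamma> z) g t ws)"
proof -
  have "(\<Sum>b\<in>{b\<in>ZN n d. g (proj n d z b) = w}. Pf n d \<gamma> (\<lambda>k. g (proj n d z k)) b ws)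
      = (\<Sum>b\<in>{b\<in>ZN n d. g (proj n d z b) = w}. Qf n (mu n d \<gamma> z) g (proj n d z b) ws)"
    by (rule sum.cong) (auto simp: Pf_proj[OF n])
  also have "\<dots> = (\<Sum>t\<in>{t. t<n \<and> g t = w}. \<Sum>b\<in>{b. b \<in> {b\<in>ZN n d. g (proj n d z b) = w} \<and> proj n d z b = t}.
        Qf n (mu n d \<gamma> z) g (proj n d z b) ws)"
    by (rule sum.group[symmetric]) (auto simp: finite_ZN proj_lt[OF n])
  also have "\<dots> = (\<Sum>t\<in>{t. t<n \<and> g t = w}. real (card {a\<in>ZN n d. proj n d z a = t}) * Qf n (mu n d \<gamma> z) g t ws)"
  proof (rule sum.cong)
    fix t assume "t \<in> {t. t<n \<and> g t = w}"
    then have "{b. b \<in> {b\<in>ZN n d. g (proj n d z b) = w} \<and> proj n d z b = t} = {b\<in>ZN n d. proj n d z b = t}"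
      by auto
    then show "(\<Sum>b\<in>{b. b \<in> {b\<in>ZN n d. g (proj n d z b) = w} \<and> proj n d z b = t}.
        Qf n (mu n d \<gamma> z) g (proj n d z b) ws) = real (card {a\<in>ZN n d. proj n d z a = t}) * Qf n (mu n d \<gamma> z) g t ws"
      by simp
  qed simp
  finally show ?thesis by (simp add: law_Cons)
qed




lemma unit_mod:
  fixes n zi :: nat
  assumes pr: "prime n" and zi: "zi < n" "zi \<noteq> 0"
  shows "\<exists>u. [zi * u = 1] (mod n)"
proof -
  have "\<not> n dvd zi" using zi by (simp add: nat_dvd_not_less)
  then have "coprime n zi" using pr by (simp add: prime_imp_coprime)
  then have "coprime zi n" by (simp add: coprime_commute)
  then show ?thesis using cong_solve_coprime_nat by auto
qed

lemma fiber_le: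
  assumes pr: "prime n" and z: "z \<in> ZN n d" and i: "i < d" "z i \<noteq> 0" and t: "t < n" "t' < n"
  shows "card {a\<in>ZN n d. proj n d z a = t} \<le> card {a\<in>ZN n d. proj n d z a = t'}"
proof -
  have n: "0 < n" using pr prime_gt_0_nat by blast
  have zi: "z i < n" using z i by (auto simp: ZN_def)
  obtain u where u: "[z i * u = 1] (mod n)" using unit_mod[OF pr zi i(2)] by blast
  define c where "c = ((t' + n - t) * u) mod n"
  define h where "h = (\<lambda>j. if j = i then c else 0)"
  have hZ: "h \<in> ZN n d" using i n by (auto simp: h_def c_def ZN_def)
  have "(\<Sum>j<d. h j * z j) = (\<Sum>j<d. if j = i then c * z i else 0)"
    by (rule sum.cong) (auto simp: h_def)
  then have "(\<Sum>j<d. h j * z j) = c * z i" using i by simp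
  then have ph: "proj n d z h = (c * z i) mod n" by (simp add: proj_def)
  have e1: "c * z i mod n = ((t' + n - t) * u) * z i mod n" unfolding c_def by (rule mod_mult_left_eq)
  have e2: "((t' + n - t) * u) * z i = (t' + n - t) * (z i * u)" by (simp add: ac_simps)
  have A: "[c * z i = (t' + n - t) * (z i * u)] (mod n)"
    unfolding cong_def by (simp only: e1 e2)
  have B: "[(t' + n - t) * (z i * u) = (t' + n - t) * 1] (mod n)"
    using u by (intro cong_mult cong_refl)
  have "[c * z i = (t' + n - t) * 1] (mod n)" by (rule cong_trans[OF A B])
  then have "[c * z i = t' + n - t] (mod n)" by simp
  then have ph2: "proj n d z h = (t' + n - t) mod n" using ph by (simp add: cong_def)
  show ?thesis
  proof (rule card_inj_on_le[where f = "\<lambda>a. addZ n d a h"])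
    show "inj_on (\<lambda>a. addZ n d a h) {a\<in>ZN n d. proj n d z a = t}"
    proof (rule inj_onI)
      fix a b assume ab: "a \<in> {a\<in>ZN n d. proj n d z a = t}" "b \<in> {a\<in>ZN n d. proj n d z a = t}"
        "addZ n d a h = addZ n d b h"
      have "a = subZ n d (addZ n d a h) h" using ab(1) sub_add[OF hZ, of a] by simp
      also have "\<dots> = subZ n d (addZ n d b h) h" using ab(3) by simp
      also have "\<dots> = b" using ab(2) sub_add[OF hZ, of b] by simp
      finally show "a = b" .
    qed
    show "(\<lambda>a. addZ n d a h) ` {a\<in>ZN n d. proj n d z a = t} \<subseteq> {a\<in>ZN n d. proj n d z a = t'}"
    proof safe
      fix a assume a: "a \<in> ZN n d" "t = proj n d z a"
      show "addZ n d a h \<in> ZN n d" using addZ_ZN[OF n] .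
      have "proj n d z (addZ n d a h) = (t + (t' + n - t) mod n) mod n"
        using a proj_add[of n d z a h] ph2 by simp
      also have "\<dots> = (t + (t' + n - t)) mod n" by (simp add: mod_add_right_eq)
      also have "t + (t' + n - t) = t' + n" using t by simp
      finally show "proj n d z (addZ n d a h) = t'" using t by simp
    qed
    show "finite {a\<in>ZN n d. proj n d z a = t'}" using finite_ZN by simp
  qed
qed

lemma fiber_card:
  assumes pr: "prime n" and z: "z \<in> ZN n d" and i: "i < d" "z i \<noteq> 0" and t: "t < n"
  shows "real (card {a\<in>ZN n d. proj n d z a = t}) = real (card (ZN n d)) / real n"
proof -
  have n: "0 < n" using pr prime_gt_0_nat by blast
  define F where "F = card {a\<in>ZN n d. proj n d z a = 0}"
  have eq: "card {a\<in>ZN n d. proj n d z a = s} = F" if "s < n" for s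
    unfolding F_def using fiber_le[OF pr z i that n] fiber_le[OF pr z i n that] by simp
  have "card (ZN n d) = (\<Sum>a\<in>ZN n d. 1)" by simp
  also have "\<dots> = (\<Sum>s\<in>{..<n}. \<Sum>a\<in>{a. a \<in> ZN n d \<and> proj n d z a = s}. 1)"
    by (rule sum.group[symmetric]) (auto simp: finite_ZN proj_lt[OF n])
  also have "\<dots> = (\<Sum>s\<in>{..<n}. F)" by (rule sum.cong) (auto simp: eq[symmetric])
  also have "\<dots> = n * F" by simp
  finally have "card (ZN n d) = n * F" .
  then show ?thesis using eq[OF t] n by simp
qed

lemma law_equal:
  assumes pr: "prime n" and x: "x \<in> ZN n d" "i < d" "x i \<noteq> 0"
    and y: "y \<in> ZN n d" "j < d" "y j \<noteq> 0"
    and mu: "mu n d \<gamma> x = mu n d \<gamma> y"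
  shows "label_law n d \<gamma> (\<lambda>k. g (proj n d x k)) w = label_law n d \<gamma> (\<lambda>k. g (proj n d y k)) w"
proof (cases w)
  case Nil
  then show ?thesis by (simp add: law_Nil)
next
  case (Cons v ws)
  have n: "0 < n" using pr prime_gt_0_nat by blast
  have a: "(\<Sum>t\<in>{t. t<n \<and> g t = v}. real (card {a\<in>ZN n d. proj n d z a = t}) * Qf n (mu n d \<gamma> z) g t ws)
     = (\<Sum>t\<in>{t. t<n \<and> g t = v}. real (card (ZN n d)) / real n * Qf n (mu n d \<gamma> z) g t ws)"
    if "z \<in> ZN n d" "k < d" "z k \<noteq> 0" for z k
    by (rule sum.cong) (use fiber_card[OF pr that] in auto)
  have "label_law n d \<gamma> (\<lambda>k. g (proj n d x k)) w = 1 / real (n ^ d) *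
     (\<Sum>t\<in>{t. t<n \<and> g t = v}. real (card (ZN n d)) / real n * Qf n (mu n d \<gamma> x) g t ws)"
    unfolding Cons law_proj[OF n] a[OF x] ..
  also have "\<dots> = label_law n d \<gamma> (\<lambda>k. g (proj n d y k)) w"
    unfolding Cons law_proj[OF n] a[OF y] mu ..
  finally show ?thesis .
qed




definition omg :: "nat \<Rightarrow> complex" where "omg n = exp (- 2 * pi * \<i> / of_nat n)"

lemma omg_pow_n: "0 < n \<Longrightarrow> omg n ^ n = 1"
proof -
  assume n: "0 < n"
  have "omg n ^ n = exp (of_nat n * (- 2 * pi * \<i> / of_nat n))"
    unfolding omg_def by (rule exp_of_nat_mult[symmetric])
  also have "of_nat n * (- 2 * pi * \<i> / of_nat n) = - (2 * pi * \<i>)" using n by simp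
  also have "exp (- (2 * pi * \<i>)) = 1" by (simp add: exp_minus)
  finally show ?thesis .
qed

lemma omg_ne_1: "2 \<le> n \<Longrightarrow> omg n \<noteq> 1"
proof
  assume n: "2 \<le> n" and e: "omg n = 1"
  have "Re (omg n) = cos (- 2 * pi / real n)"
    unfolding omg_def by (simp add: Re_exp)
  also have "\<dots> = cos (2 * pi / real n)" by (metis cos_minus minus_divide_left mult_minus_left)
  also have "\<dots> < cos 0"
  proof (rule cos_monotone_0_pi)
    show "0 < 2 * pi / real n" using n by simp
    have "2 * pi / real n \<le> 2 * pi / 2" using n by (intro divide_left_mono) auto
    then show "2 * pi / real n \<le> pi" by simp
  qed simp
  finally show False using e by simp
qed

lemma omg_pow_mod: "0 < n \<Longrightarrow> omg n ^ m = omg n ^ (m mod n)"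
proof -
  assume n: "0 < n"
  have e: "m = n * (m div n) + m mod n" by simp
  have "omg n ^ m = (omg n ^ n) ^ (m div n) * omg n ^ (m mod n)"
    by (subst e) (simp only: power_add power_mult)
  then show ?thesis using omg_pow_n[OF n] by simp
qed

lemma fourier_mu:
  assumes n: "0 < n"
  shows "fourier n d \<gamma> x = (\<Sum>j<n. of_real (mu n d \<gamma> x j) * omg n ^ j)"
proof -
  have "fourier n d \<gamma> x = (\<Sum>k\<in>ZN n d. omg n ^ proj n d x k * of_real (\<gamma> k))"
    unfolding fourier_def omg_def[symmetric] proj_def
    by (rule sum.cong) (auto simp: omg_pow_mod[OF n, of "(\<Sum>i<d. _ i * x i)"])
  also have "\<dots> = (\<Sum>j<n. \<Sum>k\<in>{k. k \<in> ZN n d \<and> proj n d x k = j}. omg n ^ proj n d x k * of_real (\<gamma> k))"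
    by (rule sum.group[symmetric]) (auto simp: finite_ZN proj_lt[OF n])
  also have "\<dots> = (\<Sum>j<n. of_real (mu n d \<gamma> x j) * omg n ^ j)"
  proof (rule sum.cong)
    fix j assume "j \<in> {..<n}"
    have "(\<Sum>k\<in>{k. k \<in> ZN n d \<and> proj n d x k = j}. omg n ^ proj n d x k * of_real (\<gamma> k))
        = (\<Sum>k\<in>{k. k \<in> ZN n d \<and> proj n d x k = j}. omg n ^ j * of_real (\<gamma> k))"
      by (rule sum.cong) auto
    also have "\<dots> = of_real (mu n d \<gamma> x j) * omg n ^ j"
      by (simp add: mu_def sum_distrib_left mult.commute)
    finally show "(\<Sum>k\<in>{k. k \<in> ZN n d \<and> proj n d x k = j}. omg n ^ proj n d x k * of_real (\<gamma> k))
        = of_real (mu n d \<gamma> x j) * omg n ^ j" .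
  qed simp
  finally show ?thesis .
qed

lemma mu_sum:
  assumes n: "0 < n" and pd: "prob_dist n d \<gamma>"
  shows "(\<Sum>j<n. mu n d \<gamma> x j) = 1"
proof -
  have "(\<Sum>j<n. mu n d \<gamma> x j) = (\<Sum>k\<in>ZN n d. \<gamma> k)"
    unfolding mu_def by (rule sum.group) (auto simp: finite_ZN proj_lt[OF n])
  then show ?thesis using pd by (simp add: prob_dist_def)
qed

lemma mu_big: 
  assumes n: "0 < n" and j: "n \<le> j" shows "mu n d \<gamma> x j = 0"
proof -
  have "{k \<in> ZN n d. proj n d x k = j} = {}"
  proof (intro equals0I)
    fix k assume "k \<in> {k \<in> ZN n d. proj n d x k = j}"
    moreover have "proj n d x k < n" by (rule proj_lt[OF n])
    ultimately show False using j by simp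
  qed
  then show ?thesis unfolding mu_def by (simp only:) simp
qed

lemma mu_eq:
  assumes pr: "prime n" and pd: "prob_dist n d \<gamma>" and rat: "\<forall>k\<in>ZN n d. \<gamma> k \<in> \<rat>"
    and f: "fourier n d \<gamma> x = fourier n d \<gamma> y"
  shows "mu n d \<gamma> x = mu n d \<gamma> y"
proof -
  have n: "0 < n" using pr by (rule prime_gt_0_nat)
  have n2: "2 \<le> n" using pr by (rule prime_ge_2_nat)
  define c where "c j = mu n d \<gamma> x j - mu n d \<gamma> y j" for j
  have mr: "mu n d \<gamma> z j \<in> \<rat>" for z j
    unfolding mu_def by (rule Rats_sum) (use rat in auto)
  have cr: "\<forall>j<n. c j \<in> \<rat>" unfolding c_def using mr by (simp add: Rats_diff)
  have "(\<Sum>j<n. of_real (c j) * omg n ^ j) = (\<Sum>j<n. of_real (mu n d \<gamma> x j) * omg n ^ j - of_real (mu n d \<gamma> y j) * omg n ^ j)"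
    by (rule sum.cong) (simp_all add: c_def left_diff_distrib)
  also have "\<dots> = fourier n d \<gamma> x - fourier n d \<gamma> y"
    by (simp only: fourier_mu[OF n] sum_subtractf)
  finally have "(\<Sum>j<n. of_real (c j) * omg n ^ j) = fourier n d \<gamma> x - fourier n d \<gamma> y" .
  then have "(\<Sum>j<n. of_real (c j) * omg n ^ j) = 0" using f by simp
  from rat_indep[OF pr omg_pow_n[OF n] omg_ne_1[OF n2] cr this]
  have ce: "\<forall>j<n. c j = c (n - 1)" .
  have "(\<Sum>j<n. c j) = 0" unfolding c_def by (simp add: sum_subtractf mu_sum[OF n pd])
  moreover have "(\<Sum>j<n. c j) = (\<Sum>j<n. c (n - 1))" by (rule sum.cong) (use ce in blast)+
  ultimately have "real n * c (n - 1) = 0" by simp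
  then have c0: "c (n - 1) = 0" using n by simp
  show ?thesis
  proof (rule ext)
    fix j show "mu n d \<gamma> x j = mu n d \<gamma> y j"
    proof (cases "j < n")
      case True
      then have "c j = c (n - 1)" using ce by blast
      then have "c j = 0" using c0 by simp
      then show ?thesis by (simp add: c_def)
    next
      case False
      then show ?thesis using mu_big[OF n] by simp
    qed
  qed
qed




lemma ndvd_cA:
  fixes N A c :: int
  assumes pr: "prime N" and N5: "5 < N" and A: "0 < A" "A < N" and c: "c \<noteq> 0" "\<bar>c\<bar> \<le> 5"
  shows "\<not> N dvd c * A"
proof
  assume "N dvd c * A"
  then have "N dvd c \<or> N dvd A" using pr by (simp add: prime_dvd_mult_iff)
  then show False
  proof
    assume "N dvd c"
    then have "N dvd \<bar>c\<bar>" by simp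
    then have "N \<le> \<bar>c\<bar>" using c by (intro zdvd_imp_le) auto
    then show False using c N5 by simp
  next
    assume "N dvd A"
    then have "N \<le> A" using A by (intro zdvd_imp_le) auto
    then show False using A by simp
  qed
qed

lemma dvd_diffE:
  fixes N p q r :: int
  shows "N dvd p \<Longrightarrow> N dvd q \<Longrightarrow> p - q = r \<Longrightarrow> N dvd r"
  using dvd_diff by blast

lemma core1:
  fixes N A B M :: int
  assumes pr: "prime N" and N5: "5 < N" and A: "0 \<le> A" "A < N" and B: "0 \<le> B" "B < N"
    and AB: "A \<noteq> B" and nAB: "\<not> N dvd (A + B)"
    and G: "\<And>v. G v = (N dvd v \<or> N dvd (v - A))"
    and H0: "G 0 = G M" and H1: "G A = G (B + M)" and H2: "G (2 * A) = G (2 * B + M)"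
  shows False
proof -
  have GM: "N dvd M \<or> N dvd (M - A)" using H0 G by simp
  have GB: "N dvd (B + M) \<or> N dvd (B + M - A)" using H1 G by simp
  have nBA: "\<not> N dvd (B - A)"
  proof
    assume d: "N dvd (B - A)"
    show False
    proof (cases "A < B")
      case True
      then have "N \<le> B - A" using d by (intro zdvd_imp_le) auto
      then show False using A B by simp
    next
      case False
      then have "A - B > 0" using AB by simp
      moreover have "N dvd (A - B)" using d by (metis dvd_minus_iff minus_diff_eq)
      ultimately have "N \<le> A - B" by (intro zdvd_imp_le) auto
      then show False using A B by simp
    qed
  qed
  have NB: "N dvd B"
    using GM
  proof
    assume m: "N dvd M"
    from GB show ?thesis
    proof
      assume "N dvd (B + M)" then show ?thesis using m dvd_diffE[of N "B + M" M B] by simp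
    next
      assume "N dvd (B + M - A)" then have "N dvd (B - A)" using m dvd_diffE[of N "B + M - A" M "B - A"] by simp
      then show ?thesis using nBA by simp
    qed
  next
    assume m: "N dvd (M - A)"
    from GB show ?thesis
    proof
      assume "N dvd (B + M)" then have "N dvd (A + B)" using m dvd_diffE[of N "B + M" "M - A" "A + B"] by simp
      then show ?thesis using nAB by simp
    next
      assume "N dvd (B + M - A)" then show ?thesis using m dvd_diffE[of N "B + M - A" "M - A" B] by simp
    qed
  qed
  have B0: "B = 0"
  proof (rule ccontr)
    assume "B \<noteq> 0"
    then have "N \<le> B" using NB B by (intro zdvd_imp_le) auto
    then show False using B by simp
  qed
  then have A0: "0 < A" using A AB by simp
  have "G (2 * A)" using H2 B0 H0 G by simp
  then have "N dvd (2 * A) \<or> N dvd (1 * A)" using G by simp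
  moreover have "\<not> N dvd (2 * A)" by (rule ndvd_cA[OF pr N5 A0 A(2)]) auto
  moreover have "\<not> N dvd (1 * A)" by (rule ndvd_cA[OF pr N5 A0 A(2)]) auto
  ultimately show False by blast
qed

lemma dvd_shift_iff:
  fixes N u v c :: int
  shows "N dvd (u - v) \<Longrightarrow> N dvd (u - c) \<longleftrightarrow> N dvd (v - c)"
proof -
  assume d: "N dvd (u - v)"
  have e: "(u - v) + (v - c) = u - c" by simp
  have "N dvd (u - v) + (v - c) \<longleftrightarrow> N dvd (v - c)" using d by (rule dvd_add_right_iff)
  then show ?thesis by (simp only: e)
qed

lemma core2:
  fixes N A B M :: int
  assumes pr: "prime N" and N5: "5 < N" and A: "0 \<le> A" "A < N" and B: "0 \<le> B" "B < N"
    and AB: "A \<noteq> B" and dAB: "N dvd (A + B)"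
    and G: "\<And>v. G v = (N dvd (v - 0) \<or> N dvd (v - A) \<or> N dvd (v - 3 * A))"
    and H0: "G 0 = G M" and H1: "G A = G (B + M)" and H3: "G (3 * A) = G (3 * B + M)"
  shows False
proof -
  have A0: "0 < A"
  proof (rule ccontr)
    assume "\<not> 0 < A" then have "A = 0" using A by simp
    then have "N dvd B" using dAB by simp
    then have "B = 0 \<or> N \<le> B" using B by (metis zdvd_imp_le order_less_le)
    then show False using B AB \<open>A = 0\<close> by auto
  qed
  have Gc: "G u = G v" if "N dvd (u - v)" for u v
    unfolding G using dvd_shift_iff[OF that, of 0] dvd_shift_iff[OF that, of A] dvd_shift_iff[OF that, of "3*A"] by simp
  have K: "False" if "N dvd p" "N dvd q" "p - q = c * A" "c \<in> {1,2,3,4,5}" for p q c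
  proof -
    have "N dvd c * A" using dvd_diff[OF that(1,2)] that(3) by simp
    moreover have "\<not> N dvd c * A" by (rule ndvd_cA[OF pr N5 A0 A(2)]) (use that(4) in auto)
    ultimately show False by blast
  qed
  have GM: "G M" using H0 G by simp
  have G1: "G (M - A)"
  proof -
    have "G (B + M)" using H1 G by simp
    moreover have "N dvd ((B + M) - (M - A))" using dAB by (simp add: algebra_simps)
    ultimately show ?thesis using Gc by blast
  qed
  have G3: "G (M - 3 * A)"
  proof -
    have "G (3 * B + M)" using H3 G by simp
    moreover have "N dvd ((3 * B + M) - (M - 3 * A))"
    proof -
      have "(3 * B + M) - (M - 3 * A) = 3 * (A + B)" by (simp add: algebra_simps)
      moreover have "N dvd 3 * (A + B)" using dAB by (rule dvd_mult)
      ultimately show ?thesis by (simp only:)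
    qed
    ultimately show ?thesis using Gc by blast
  qed
  from GM[unfolded G] show False
  proof (elim disjE)
    assume m: "N dvd (M - 0)"
    from G1[unfolded G] show False
    proof (elim disjE)
      assume "N dvd (M - A - 0)" then show False using K[OF m, of "M - A - 0" 1] by simp
    next
      assume "N dvd (M - A - A)" then show False using K[OF m, of "M - A - A" 2] by simp
    next
      assume "N dvd (M - A - 3 * A)" then show False using K[OF m, of "M - A - 3 * A" 4] by simp
    qed
  next
    assume m: "N dvd (M - A)"
    from G3[unfolded G] show False
    proof (elim disjE)
      assume "N dvd (M - 3 * A - 0)" then show False using K[OF m, of "M - 3 * A - 0" 2] by simp
    next
      assume "N dvd (M - 3 * A - A)" then show False using K[OF m, of "M - 3 * A - A" 3] by simp
    next
      assume "N dvd (M - 3 * A - 3 * A)" then show False using K[OF m, of "M - 3 * A - 3 * A" 5] by simp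
    qed
  next
    assume m: "N dvd (M - 3 * A)"
    from G1[unfolded G] show False
    proof (elim disjE)
      assume h: "N dvd (M - A - 0)" then show False using K[OF h m, of 2] by simp
    next
      assume h: "N dvd (M - A - A)" then show False using K[OF h m, of 1] by simp
    next
      assume h: "N dvd (M - A - 3 * A)" then show False using K[OF m h, of 1] by simp
    qed
  qed
qed




lemma mod_cong_int: "(N::int) dvd (a mod N - a)"
proof -
  have "(a mod N) mod N = a mod N" by simp
  then show ?thesis by (simp only: mod_eq_dvd_iff)
qed

lemma noneq:
  assumes pr: "prime n" and n5: "5 < n" and x: "x \<in> ZN n d" and y: "y \<in> ZN n d" and xy: "x \<noteq> y"
  shows "\<exists>g::nat\<Rightarrow>bool. \<not> (\<exists>l\<in>ZN n d. \<forall>k\<in>ZN n d. g (proj n d x k) = g (proj n d y (addZ n d k l)))"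
proof -
  obtain i where i: "i < d" "x i \<noteq> y i"
  proof (rule ccontr)
    assume "\<not> thesis"
    then have "\<forall>i<d. x i = y i" using that by blast
    then have "x = y" using x y by (auto simp: ZN_def fun_eq_iff) (metis not_le)
    then show False using xy by simp
  qed
  define N where "N = int n"
  define A where "A = int (x i)"
  define B where "B = int (y i)"
  have prN: "prime N" using pr by (simp add: N_def)
  have N5: "5 < N" using n5 by (simp add: N_def)
  have A: "0 \<le> A" "A < N" using x i by (auto simp: A_def N_def ZN_def)
  have B: "0 \<le> B" "B < N" using y i by (auto simp: B_def N_def ZN_def)
  have AB: "A \<noteq> B" using i by (simp add: A_def B_def)
  define G1 where "G1 v = (N dvd (v - 0) \<or> N dvd (v - A) \<or> N dvd (v - 3 * A))" for v
  define G0 where "G0 v = (N dvd (v - 0) \<or> N dvd (v - A))" for v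
  define G where "G = (if N dvd (A + B) then G1 else G0)"
  have Gc: "G u = G v" if "N dvd (u - v)" for u v
    unfolding G_def G0_def G1_def
    using dvd_shift_iff[OF that, of 0] dvd_shift_iff[OF that, of A] dvd_shift_iff[OF that, of "3*A"] by simp
  define g where "g s = G (int s)" for s
  have "\<not> (\<exists>l\<in>ZN n d. \<forall>k\<in>ZN n d. g (proj n d x k) = g (proj n d y (addZ n d k l)))"
  proof
    assume "\<exists>l\<in>ZN n d. \<forall>k\<in>ZN n d. g (proj n d x k) = g (proj n d y (addZ n d k l))"
    then obtain l where l: "l \<in> ZN n d" and hl: "\<forall>k\<in>ZN n d. g (proj n d x k) = g (proj n d y (addZ n d k l))"
      by blast
    define M where "M = int (proj n d y l)"
    have H: "G (int t * A) = G (int t * B + M)" if t: "t < n" for t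
    proof -
      define k where "k = (\<lambda>j. if j = i then t else 0)"
      have kZ: "k \<in> ZN n d" using t i by (auto simp: k_def ZN_def)
      have sk: "(\<Sum>j<d. k j * z j) = t * z i" for z
      proof -
        have "(\<Sum>j<d. k j * z j) = (\<Sum>j<d. if j = i then t * z i else 0)"
          by (rule sum.cong) (auto simp: k_def)
        then show ?thesis using i by simp
      qed
      have px: "proj n d x k = (t * x i) mod n" by (simp add: proj_def sk)
      have py: "proj n d y (addZ n d k l) = ((t * y i) mod n + proj n d y l) mod n"
      proof -
        have "proj n d y k = (t * y i) mod n" by (simp add: proj_def sk)
        then show ?thesis using proj_add[of n d y k l] by simp
      qed
      have e1: "G (int (proj n d x k)) = G (int t * A)"
      proof (rule Gc)
        have "int (proj n d x k) = (int t * A) mod N" by (simp add: px A_def N_def zmod_int)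
        then show "N dvd (int (proj n d x k) - int t * A)" using mod_cong_int by simp
      qed
      have e2: "G (int (proj n d y (addZ n d k l))) = G (int t * B + M)"
      proof (rule Gc)
        have "int (proj n d y (addZ n d k l)) = ((int t * B) mod N + M) mod N"
          by (simp add: py B_def N_def M_def zmod_int)
        also have "\<dots> = (int t * B + M) mod N" by (simp add: mod_add_left_eq)
        finally show "N dvd (int (proj n d y (addZ n d k l)) - (int t * B + M))" using mod_cong_int by simp
      qed
      show ?thesis using hl kZ e1 e2 by (simp add: g_def)
    qed
    have H0: "G 0 = G M" using H[of 0] n5 by simp
    have H1: "G A = G (B + M)" using H[of 1] n5 by simp
    have H2: "G (2 * A) = G (2 * B + M)" using H[of 2] n5 by simp
    have H3: "G (3 * A) = G (3 * B + M)" using H[of 3] n5 by simp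
    show False
    proof (cases "N dvd (A + B)")
      case True
      then have GG: "G v = (N dvd (v - 0) \<or> N dvd (v - A) \<or> N dvd (v - 3 * A))" for v
        by (simp add: G_def G1_def)
      show False by (rule core2[OF prN N5 A B AB True GG H0 H1 H3])
    next
      case False
      then have GG: "G v = (N dvd v \<or> N dvd (v - A))" for v
        by (simp add: G_def G0_def)
      show False by (rule core1[OF prN N5 A B AB False GG H0 H1 H2])
    qed
  qed
  then show ?thesis by blast
qed




lemma dbl:
  assumes pr: "prime n" and n5: "5 < n" and z: "z \<in> ZN n d" and i: "i < d" "z i \<noteq> 0"
    and pd: "prob_dist n d \<gamma>" and mz: "mu n d \<gamma> z = mu n d \<gamma> (\<lambda>_. 0)"
  shows "\<exists>z2\<in>ZN n d. z2 i \<noteq> 0 \<and> z2 \<noteq> z \<and> mu n d \<gamma> z2 = mu n d \<gamma> z"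
proof -
  have n: "0 < n" using n5 by simp
  have nonneg: "\<forall>k\<in>ZN n d. 0 \<le> \<gamma> k" using pd by (simp add: prob_dist_def)
  have p0: "proj n d (\<lambda>_. 0) k = 0" for k by (simp add: proj_def)
  have supp: "\<gamma> k = 0" if k: "k \<in> ZN n d" and pk: "proj n d z k \<noteq> 0" for k
  proof -
    define j where "j = proj n d z k"
    have e: "{k\<in>ZN n d. proj n d (\<lambda>_. 0) k = j} = {}" using pk by (simp add: p0 j_def)
    have "mu n d \<gamma> (\<lambda>_. 0) j = 0" unfolding mu_def e by simp
    then have "mu n d \<gamma> z j = 0" using mz by simp
    then have "(\<Sum>k'\<in>{k'\<in>ZN n d. proj n d z k' = j}. \<gamma> k') = 0" by (simp add: mu_def)
    then have "\<forall>k'\<in>{k'\<in>ZN n d. proj n d z k' = j}. \<gamma> k' = 0"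
      using nonneg by (subst (asm) sum_nonneg_eq_0_iff) (auto simp: finite_ZN)
    then show ?thesis using k by (simp add: j_def)
  qed
  define z2 where "z2 = (\<lambda>j. if j < d then (2 * z j) mod n else 0)"
  have z2Z: "z2 \<in> ZN n d" using n by (auto simp: z2_def ZN_def)
  have p2: "proj n d z2 k = (2 * proj n d z k) mod n" for k
  proof -
    have "(\<Sum>j<d. k j * z2 j) = (\<Sum>j<d. k j * ((2 * z j) mod n))"
      by (rule sum.cong) (auto simp: z2_def)
    then have "(\<Sum>j<d. k j * z2 j) mod n = (\<Sum>j<d. k j * ((2 * z j) mod n) mod n) mod n"
      by (simp add: mod_sum_eq)
    also have "\<dots> = (\<Sum>j<d. k j * (2 * z j) mod n) mod n" by (simp add: mod_mult_right_eq)
    also have "\<dots> = (\<Sum>j<d. k j * (2 * z j)) mod n" by (simp add: mod_sum_eq)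
    also have "(\<Sum>j<d. k j * (2 * z j)) = 2 * (\<Sum>j<d. k j * z j)"
      by (simp add: sum_distrib_left mult_ac)
    also have "2 * (\<Sum>j<d. k j * z j) mod n = (2 * ((\<Sum>j<d. k j * z j) mod n)) mod n"
      by (simp add: mod_mult_right_eq)
    finally show ?thesis by (simp add: proj_def)
  qed
  have zi: "0 < z i" "z i < n" using z i by (auto simp: ZN_def)
  have z2i: "z2 i \<noteq> 0"
  proof
    assume "z2 i = 0"
    then have "n dvd 2 * z i" using i by (simp add: z2_def mod_eq_0_iff_dvd)
    then have "n dvd 2 \<or> n dvd z i" using pr by (simp add: prime_dvd_mult_iff)
    then show False
    proof
      assume "n dvd 2" then have "n \<le> 2" by (rule dvd_imp_le) simp
      then show False using n5 by simp
    next
      assume "n dvd z i" then have "n \<le> z i" using zi by (intro dvd_imp_le) auto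
      then show False using zi by simp
    qed
  qed
  have z2ne: "z2 \<noteq> z"
  proof
    assume "z2 = z"
    then have "(2 * z i) mod n = z i" using i by (metis z2_def)
    then have "(2 * z i) mod n = (z i) mod n" using zi by simp
    moreover have "z i \<le> 2 * z i" by simp
    ultimately have "n dvd 2 * z i - z i" using mod_eq_dvd_iff_nat[of "z i" "2 * z i" n] by simp
    then have "n dvd z i" by simp
    then have "n \<le> z i" using zi by (intro dvd_imp_le) auto
    then show False using zi by simp
  qed
  have mu2: "mu n d \<gamma> z2 j = mu n d \<gamma> z j" for j
  proof -
    define S where "S = {k\<in>ZN n d. proj n d z k = 0 \<and> j = 0}"
    have "mu n d \<gamma> z j = sum \<gamma> S" unfolding mu_def
    proof (rule sum.mono_neutral_right)
      show "finite {k\<in>ZN n d. proj n d z k = j}" using finite_ZN by simp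
      show "S \<subseteq> {k\<in>ZN n d. proj n d z k = j}" by (auto simp: S_def)
      show "\<forall>k\<in>{k\<in>ZN n d. proj n d z k = j} - S. \<gamma> k = 0" using supp by (auto simp: S_def)
    qed
    moreover have "mu n d \<gamma> z2 j = sum \<gamma> S" unfolding mu_def
    proof (rule sum.mono_neutral_right)
      show "finite {k\<in>ZN n d. proj n d z2 k = j}" using finite_ZN by simp
      show "S \<subseteq> {k\<in>ZN n d. proj n d z2 k = j}" by (auto simp: S_def p2)
      show "\<forall>k\<in>{k\<in>ZN n d. proj n d z2 k = j} - S. \<gamma> k = 0"
      proof
        fix k assume k: "k \<in> {k\<in>ZN n d. proj n d z2 k = j} - S"
        show "\<gamma> k = 0"
        proof (rule ccontr)
          assume "\<gamma> k \<noteq> 0"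
          then have "proj n d z k = 0" using supp k by blast
          then have "j = 0" using k p2[of k] by simp
          then show False using k \<open>proj n d z k = 0\<close> by (auto simp: S_def)
        qed
      qed
    qed
    ultimately show ?thesis by simp
  qed
  show ?thesis using z2Z z2i z2ne mu2 by blast
qed

lemma final:
  assumes pr: "prime n" and n5: "5 < n" and x: "x \<in> ZN n d" "i < d" "x i \<noteq> 0"
    and y: "y \<in> ZN n d" "j < d" "y j \<noteq> 0" and xy: "x \<noteq> y"
    and mu: "mu n d \<gamma> x = mu n d \<gamma> y"
  shows "\<not> reconstructive n d \<gamma>"
proof
  assume rec: "reconstructive n d \<gamma>"
  obtain g :: "nat \<Rightarrow> bool" where g: "\<not> (\<exists>l\<in>ZN n d. \<forall>k\<in>ZN n d. g (proj n d x k) = g (proj n d y (addZ n d k l)))"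
    using noneq[OF pr n5 x(1) y(1) xy] by blast
  have "\<forall>w. label_law n d \<gamma> (\<lambda>k. g (proj n d x k)) w = label_law n d \<gamma> (\<lambda>k. g (proj n d y k)) w"
    using law_equal[OF pr x y mu] by blast
  then have "\<exists>l\<in>ZN n d. \<forall>k\<in>ZN n d. g (proj n d x k) = g (proj n d y (addZ n d k l))"
    using rec unfolding reconstructive_def by blast
  then show False using g by blast
qed

theorem theorem7:
  fixes n d :: nat and \<gamma> :: "(nat \<Rightarrow> nat) \<Rightarrow> real"
  assumes "prime n" and "n > 5" and "d \<ge> 1"
    and "prob_dist n d \<gamma>"
    and "\<forall>k\<in>ZN n d. \<gamma> k \<in> \<rat>"
    and "reconstructive n d \<gamma>"
  shows "\<forall>x\<in>ZN n d. \<forall>y\<in>ZN n d. x \<noteq> y \<longrightarrow> fourier n d \<gamma> x \<noteq> fourier n d \<gamma> y"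
proof (intro ballI impI notI)
  fix x y assume x: "x \<in> ZN n d" and y: "y \<in> ZN n d" and xy: "x \<noteq> y"
    and f: "fourier n d \<gamma> x = fourier n d \<gamma> y"
  note pr = assms(1) and n5 = assms(2) and pd = assms(4) and rec = assms(6)
  have mu: "mu n d \<gamma> x = mu n d \<gamma> y" by (rule mu_eq[OF pr pd assms(5) f])
  have zero: "z = (\<lambda>_. 0)" if "z \<in> ZN n d" "\<not> (\<exists>i<d. z i \<noteq> 0)" for z
    using that by (auto simp: ZN_def fun_eq_iff)
  show False
  proof (cases "\<exists>i<d. x i \<noteq> 0")
    case xnz: True
    then obtain i where i: "i < d" "x i \<noteq> 0" by blast
    show False
    proof (cases "\<exists>j<d. y j \<noteq> 0")
      case True
      then obtain j where j: "j < d" "y j \<noteq> 0" by blast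
      show False using final[OF pr n5 x i y j xy mu] rec by blast
    next
      case False
      then have "y = (\<lambda>_. 0)" using zero y by blast
      then have "mu n d \<gamma> x = mu n d \<gamma> (\<lambda>_. 0)" using mu by simp
      from dbl[OF pr n5 x i pd this] obtain x2 where x2: "x2 \<in> ZN n d" "x2 i \<noteq> 0" "x2 \<noteq> x"
        "mu n d \<gamma> x2 = mu n d \<gamma> x" by blast
      show False using final[OF pr n5 x i x2(1) i(1) x2(2) x2(3)[symmetric] x2(4)[symmetric]] rec by blast
    qed
  next
    case False
    then have x0: "x = (\<lambda>_. 0)" using zero x by blast
    have "\<exists>j<d. y j \<noteq> 0"
    proof (rule ccontr)
      assume "\<not> (\<exists>j<d. y j \<noteq> 0)"
      then have "y = (\<lambda>_. 0)" using zero y by blast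
      then show False using x0 xy by simp
    qed
    then obtain j where j: "j < d" "y j \<noteq> 0" by blast
    have "mu n d \<gamma> y = mu n d \<gamma> (\<lambda>_. 0)" using mu x0 by simp
    from dbl[OF pr n5 y j pd this] obtain y2 where y2: "y2 \<in> ZN n d" "y2 j \<noteq> 0" "y2 \<noteq> y"
      "mu n d \<gamma> y2 = mu n d \<gamma> y" by blast
    show False using final[OF pr n5 y2(1) j(1) y2(2) y j y2(3) y2(4)] rec by blast
  qed
qed


end
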